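(* Consider the one-stage adversarial networked control (ANC) game described in the context, and suppose that for every $x\in\mathbb{R}^n$ and every $a\in\mathcal{A}$ the functions $u\mapsto\Sigma(F(x,0),u,a)$ and $u\mapsto\Sigma(F(x,u),u,a)$ are continuous, coercive and convex functions $\mathbb{R}^m\to\mathbb{R}$. Then for every initial pair $(x,s)\in\mathbb{R}^n\times\mathcal{F}$ the game has a finite value, $-\infty<J_1=J_2<\infty$, and the game has a (possibly non-unique) saddle point $(u^*,p^* )$. Furthermore, for every $x$ there exists a compact set $U(x)\subset\mathbb{R}^m$ which contains the controller's optimal response $u^*=u^*(x,s)$ and is such that \[ J_1=\inf_{u\in U(x)}\sup_{p\in\mathcal{S}_{N-1}}p'h^{x,s}(u)=\sup_{p\in\mathcal{S}_{N-1}}\inf_{u\in U(x)}p'h^{x,s}(u)=J_2 . \]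
   Context: Setting (one-stage ANC game). Let $\mathcal{F}=\{1,\dots,|\mathcal{F}|\}$ be a finite set of transmission regimes and $\mathcal{A}=\{1,\dots,N\}$ a finite set of jammer actions. For each $a\in\mathcal{A}$ let $P(a)$ be an $|\mathcal{F}|\times|\mathcal{F}|$ row-stochastic matrix, and let $q=(q_1,\dots,q_{|\mathcal{F}|})'\in[0,1]^{|\mathcal{F}|}$. Let $F:\mathbb{R}^n\times\mathbb{R}^m\to\mathbb{R}^n$, $\sigma^0:\mathbb{R}^n\times\mathbb{R}^m\to\mathbb{R}$, $\sigma^1:\mathbb{R}^n\to\mathbb{R}$ and $g^0:\mathcal{A}\times\mathcal{F}\to\mathbb{R}$ be given. For a given plant state $x\in\mathbb{R}^n$ and link regime $s\in\mathcal{F}$, the controller chooses $u\in\mathbb{R}^m$ and the jammer chooses a probability vector $p$ in the unit simplex $\mathcal{S}_{N-1}=\{p\in\mathbb{R}^N:p_j\ge0,\sum_jp_j=1\}$; an action $a\in\mathcal{A}$ is drawn according to $p$, then a new regime $s^+$ is drawn with $\mathrm{Pr}(s^+=i)=P_{si}(a)$, then $b\in\{0,1\}$ is drawn with $\mathrm{Pr}(b=1\mid s^+)=q_{s^+}$, and $x^+=F(x,bu)$. The payoff (cost to the controller, reward to the jammer) is $\Sigma(x^+,u,a)=\sigma^0(x,u)+\sigma^1(x^+)-g^0(a,s)$. Its expectation is $\mathbb{E}^{u,p}\Sigma(x^+,u,a)=p'h^{x,s}(u)$, where $h^{x,s}:\mathbb{R}^m\to\mathbb{R}^N$ has components $h^{x,s}_i(u)=(P(i)q)_s\,\Sigma(F(x,u),u,i)+(1-(P(i)q)_s)\,\Sigma(F(x,0),u,i)$,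 with $(P(i)q)_s$ the $s$-th entry of the vector $P(i)q$. The upper and lower values are $J_1=\inf_{u\in\mathbb{R}^m}\sup_{p\in\mathcal{S}_{N-1}}p'h^{x,s}(u)$ and $J_2=\sup_{p\in\mathcal{S}_{N-1}}\inf_{u\in\mathbb{R}^m}p'h^{x,s}(u)$. A saddle point is a pair $(u^*,p^* )\in\mathbb{R}^m\times\mathcal{S}_{N-1}$ with $p'h^{x,s}(u^* )\le(p^* )'h^{x,s}(u^* )\le(p^* )'h^{x,s}(u)$ for all $u\in\mathbb{R}^m$, $p\in\mathcal{S}_{N-1}$ (so that $(p^* )'h^{x,s}(u^* )=J_1=J_2$); $u^*$ is the controller's optimal response. A function $h:\mathbb{R}^m\to\mathbb{R}$ is coercive if there is $\eta:\mathbb{R}_+\to\mathbb{R}$ with $\lim_{y\to+\infty}\eta(y)=+\infty$ and $h(u)\ge\eta(\|u\|)$ for all $u$. *)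

theory Defs
  imports "HOL-Analysis.Analysis"
begin

text \<open>Transmission regimes are the elements of a finite type 'f, jammer actions the
elements of a finite type 'a (so N = CARD('a)). P a is the matrix (P a s i)_{s,i}.\<close>

definition row_stochastic :: "('f::finite \<Rightarrow> 'f \<Rightarrow> real) \<Rightarrow> bool" where
  "row_stochastic M \<longleftrightarrow> (\<forall>s i. 0 \<le> M s i) \<and> (\<forall>s. (\<Sum>i\<in>UNIV. M s i) = 1)"

definition prob_simplex :: "('a::finite \<Rightarrow> real) set" where
  "prob_simplex = {p. (\<forall>j. 0 \<le> p j) \<and> (\<Sum>j\<in>UNIV. p j) = 1}"

definition coercive :: "('b::real_normed_vector \<Rightarrow> real) \<Rightarrow> bool" where
  "coercive h \<longleftrightarrow> (\<exists>\<eta>::real \<Rightarrow> real. filterlim \<eta> at_top at_top \<and> (\<forall>u. \<eta> (norm u) \<le> h u))"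

text \<open>Payoff Sigma(x+,u,a) = sigma0(x,u) + sigma1(x+) - g0(a,s), for current state x and regime s.\<close>
definition Payoff ::
  "('x \<Rightarrow> 'u \<Rightarrow> real) \<Rightarrow> ('x \<Rightarrow> real) \<Rightarrow> ('a \<Rightarrow> 'f \<Rightarrow> real)
   \<Rightarrow> 'x \<Rightarrow> 'f \<Rightarrow> 'x \<Rightarrow> 'u \<Rightarrow> 'a \<Rightarrow> real" where
  "Payoff \<sigma>0 \<sigma>1 g0 x s xp u a = \<sigma>0 x u + \<sigma>1 xp - g0 a s"

definition Pq :: "('a \<Rightarrow> 'f \<Rightarrow> 'f \<Rightarrow> real) \<Rightarrow> ('f::finite \<Rightarrow> real) \<Rightarrow> 'a \<Rightarrow> 'f \<Rightarrow> real" where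
  "Pq P q a s = (\<Sum>i\<in>UNIV. P a s i * q i)"

definition hvec ::
  "('x \<Rightarrow> 'u::zero \<Rightarrow> 'x) \<Rightarrow> ('x \<Rightarrow> 'u \<Rightarrow> real) \<Rightarrow> ('x \<Rightarrow> real) \<Rightarrow> ('a \<Rightarrow> 'f \<Rightarrow> real)
   \<Rightarrow> ('a \<Rightarrow> 'f \<Rightarrow> 'f \<Rightarrow> real) \<Rightarrow> ('f::finite \<Rightarrow> real) \<Rightarrow> 'x \<Rightarrow> 'f \<Rightarrow> 'u \<Rightarrow> 'a \<Rightarrow> real" where
  "hvec F \<sigma>0 \<sigma>1 g0 P q x s u i =
     Pq P q i s * Payoff \<sigma>0 \<sigma>1 g0 x s (F x u) u i
     + (1 - Pq P q i s) * Payoff \<sigma>0 \<sigma>1 g0 x s (F x 0) u i"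

definition expected :: "('a::finite \<Rightarrow> real) \<Rightarrow> ('a \<Rightarrow> real) \<Rightarrow> real" where
  "expected p h = (\<Sum>j\<in>UNIV. p j * h j)"

definition upper_value :: "('u \<Rightarrow> 'a::finite \<Rightarrow> real) \<Rightarrow> 'u set \<Rightarrow> ereal" where
  "upper_value h U = (INF u\<in>U. SUP p\<in>prob_simplex. ereal (expected p (h u)))"

definition lower_value :: "('u \<Rightarrow> 'a::finite \<Rightarrow> real) \<Rightarrow> 'u set \<Rightarrow> ereal" where
  "lower_value h U = (SUP p\<in>prob_simplex. INF u\<in>U. ereal (expected p (h u)))"

definition saddle_point :: "('u \<Rightarrow> 'a::finite \<Rightarrow> real) \<Rightarrow> 'u \<Rightarrow> ('a \<Rightarrow> real) \<Rightarrow> bool" where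
  "saddle_point h us ps \<longleftrightarrow> ps \<in> prob_simplex \<and>
     (\<forall>u. \<forall>p\<in>prob_simplex. expected p (h us) \<le> expected ps (h us) \<and> expected ps (h us) \<le> expected ps (h u))"

end

theory Submission imports Defs begin

lemma expected_le:
  assumes "p \<in> prob_simplex" "\<And>i. y i \<le> c"
  shows "expected p y \<le> c"
proof -
  have "expected p y \<le> (\<Sum>j\<in>UNIV. p j * c)" unfolding expected_def
    using assms by (intro sum_mono mult_left_mono) (auto simp: prob_simplex_def)
  also have "\<dots> = c" using assms(1) by (simp add: prob_simplex_def sum_distrib_right[symmetric])
  finally show ?thesis .
qed

lemma unit_in_simplex: "(\<lambda>j. if j = i then 1 else 0) \<in> prob_simplex"
  by (simp add: prob_simplex_def)

lemma expected_unit: "expected (\<lambda>j. if j = i then 1 else 0) y = y i"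
  unfolding expected_def
  by (subst sum.cong[OF refl, of _ _ "\<lambda>j. if j = i then y j else 0"]) auto

lemma Max_cont:
  fixes h :: "'u::topological_space \<Rightarrow> 'a \<Rightarrow> real"
  assumes "\<And>i. continuous_on UNIV (\<lambda>u. h u i)" "finite A" "A \<noteq> {}"
  shows "continuous_on UNIV (\<lambda>u. Max ((h u) ` A))"
  using assms(2,3)
proof (induction A rule: finite_ne_induct)
  case (singleton x) then show ?case using assms(1) by simp
next
  case (insert x F)
  have "(\<lambda>u. Max ((h u) ` insert x F)) = (\<lambda>u. max (h u x) (Max ((h u) ` F)))"
    using insert by (auto simp: Max_insert)
  then show ?case using insert assms(1) by (auto intro!: continuous_on_max)
qed

lemma core:
  fixes h :: "'u::euclidean_space \<Rightarrow> 'a::finite \<Rightarrow> real"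
  assumes cont: "\<And>i. continuous_on UNIV (\<lambda>u. h u i)"
    and conv: "\<And>i. convex_on UNIV (\<lambda>u. h u i)"
    and bnd: "\<And>c. \<exists>R. \<forall>u. (\<forall>i. h u i \<le> c) \<longrightarrow> norm u \<le> R"
  shows "\<exists>us ps. saddle_point h us ps"
proof -
  define \<phi> where "\<phi> u = Max (range (h u))" for u
  have hle: "h u i \<le> \<phi> u" for u i unfolding \<phi>_def by (rule Max_ge) auto
  have hex: "\<exists>i. h u i = \<phi> u" for u
  proof -
    have "\<phi> u \<in> range (h u)" unfolding \<phi>_def by (rule Max_in) auto
    then show ?thesis by auto
  qed
  have phicont: "continuous_on UNIV \<phi>" unfolding \<phi>_def
    using Max_cont[of h UNIV] cont by simp
  define S where "S = {u. \<phi> u \<le> \<phi> 0}"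
  have "closed S" unfolding S_def
    by (rule closed_Collect_le[OF phicont]) auto
  moreover have "bounded S"
  proof -
    obtain R where R: "\<forall>u. (\<forall>i. h u i \<le> \<phi> 0) \<longrightarrow> norm u \<le> R" using bnd by blast
    have "S \<subseteq> cball 0 R"
    proof
      fix u assume "u \<in> S"
      then have "\<forall>i. h u i \<le> \<phi> 0" unfolding S_def using hle by (meson order_trans mem_Collect_eq)
      then show "u \<in> cball 0 R" using R by (simp add: dist_norm)
    qed
    then show ?thesis using bounded_cball bounded_subset by blast
  qed
  ultimately have "compact S" using compact_eq_bounded_closed by blast
  moreover have "S \<noteq> {}" unfolding S_def by auto
  ultimately obtain us where us: "us \<in> S" "\<forall>y\<in>S. \<phi> us \<le> \<phi> y"
    using continuous_attains_inf[of S \<phi>] phicont continuous_on_subset by blast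
  have usmin: "\<phi> us \<le> \<phi> u" for u
    using us by (cases "u \<in> S") (auto simp: S_def)
  define v where "v = \<phi> us"
  define C where "C = {z::real^'a. \<exists>u. \<forall>i. h u i \<le> z$i}"
  define D where "D = {w::real^'a. \<forall>i. w$i < v}"
  have "convex C" unfolding convex_def C_def
  proof (intro ballI allI impI, clarsimp)
    fix z1 z2 u1 u2 and t1 t2 :: real
    assume a: "\<forall>i. h u1 i \<le> z1 $ i" "\<forall>i. h u2 i \<le> z2 $ i" "0 \<le> t1" "0 \<le> t2" "t1 + t2 = 1"
    show "\<exists>u. \<forall>i. h u i \<le> t1 * z1 $ i + t2 * z2 $ i"
    proof (intro exI allI)
      fix i
      have t1: "t1 = 1 - t2" using a(5) by simp
      have "h ((1 - t2) *\<^sub>R u1 + t2 *\<^sub>R u2) i \<le> (1 - t2) * h u1 i + t2 * h u2 i"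
        using convex_onD[OF conv[of i], of t2 u1 u2] a(3,4,5) by simp
      also have "\<dots> \<le> (1 - t2) * z1 $ i + t2 * z2 $ i"
        using a(1,2) a(3,4,5) by (intro add_mono mult_left_mono) simp_all
      finally show "h (t1 *\<^sub>R u1 + t2 *\<^sub>R u2) i \<le> t1 * z1 $ i + t2 * z2 $ i"
        unfolding t1 .
    qed
  qed
  moreover have "convex D" unfolding convex_def D_def
  proof (intro ballI allI impI, clarsimp)
    fix z1 z2 :: "real^'a" and t1 t2 :: real and i
    assume a: "\<forall>i. z1 $ i < v" "\<forall>i. z2 $ i < v" "0 \<le> t1" "0 \<le> t2" "t1 + t2 = 1"
    have "t1 * z1 $ i \<le> t1 * v" "t2 * z2 $ i \<le> t2 * v"
      using a by (auto intro: mult_left_mono less_imp_le)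
    moreover have "t1 * z1 $ i < t1 * v \<or> t2 * z2 $ i < t2 * v"
      using a by (cases "t1 = 0") auto
    ultimately have "t1 * z1 $ i + t2 * z2 $ i < t1 * v + t2 * v" by linarith
    then show "t1 * z1 $ i + t2 * z2 $ i < v" using a(5) by (simp add: distrib_right[symmetric])
  qed
  moreover have "D \<noteq> {}" proof -
    have "(\<chi> i. v - 1) \<in> D" unfolding D_def by simp
    then show ?thesis by blast
  qed
  moreover have "C \<noteq> {}" proof -
    have "(\<chi> i. h 0 i) \<in> C" unfolding C_def by auto
    then show ?thesis by blast
  qed
  moreover have "D \<inter> C = {}"
  proof (rule ccontr)
    assume "D \<inter> C \<noteq> {}"
    then obtain z u where "\<forall>i. h u i \<le> z$i" "\<forall>i. z$i < v" unfolding C_def D_def by auto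
    moreover obtain i where "h u i = \<phi> u" using hex by blast
    ultimately have "\<phi> u < v" by (metis order.strict_trans1)
    then show False using usmin v_def by (simp add: not_less[symmetric])
  qed
  ultimately obtain a b where ab: "a \<noteq> 0" "\<forall>x\<in>D. inner a x \<le> b" "\<forall>x\<in>C. inner a x \<ge> b"
    using separating_hyperplane_sets[of D C] by blast
  have inner_eq: "inner a x = (\<Sum>i\<in>UNIV. a$i * x$i)" for x :: "real^'a"
    by (simp add: inner_vec_def)
  have apos: "a$k \<ge> 0" for k
  proof (rule ccontr)
    assume neg: "\<not> a$k \<ge> 0"
    define z0 where "z0 = (\<chi> i. h us i)"
    define t where "t = (\<bar>inner a z0 - b\<bar> + 1) / (- a$k)"
    have tpos: "t > 0" using neg unfolding t_def by (intro divide_pos_pos) auto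
    have tk: "t * a$k = - (\<bar>inner a z0 - b\<bar> + 1)" using neg unfolding t_def by (simp add: field_simps)
    define z where "z = z0 + t *\<^sub>R axis k 1"
    have "z \<in> C" unfolding C_def z_def z0_def
      using tpos by (auto simp: axis_def intro!: exI[of _ us])
    then have "inner a z \<ge> b" using ab by blast
    moreover have "inner a z = inner a z0 + t * a$k"
      unfolding z_def by (simp add: inner_add_right inner_axis)
    ultimately show False using tk by linarith
  qed
  define Sa where "Sa = (\<Sum>i\<in>UNIV. a$i)"
  obtain k where "a$k \<noteq> 0" using ab(1) by (metis vec_eq_iff zero_index)
  then have "a$k > 0" using apos[of k] by linarith
  moreover have "a$k \<le> Sa" unfolding Sa_def by (rule member_le_sum) (auto intro: apos)
  ultimately have Sapos: "Sa > 0" by linarith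
  define p where "p j = a$j / Sa" for j
  have pS: "p \<in> prob_simplex" unfolding prob_simplex_def p_def
    using Sapos apos by (auto simp: sum_divide_distrib[symmetric] Sa_def)
  have pexp: "expected p (h u) = inner a (\<chi> i. h u i) / Sa" for u
    unfolding expected_def p_def inner_eq by (simp add: sum_divide_distrib)
  have key: "inner a (\<chi> i. h u i) \<ge> v * Sa" for u
  proof (rule ccontr)
    assume neg2: "\<not> ?thesis"
    define c where "c = inner a (\<chi> i. h u i) / Sa"
    have cv: "c < v" using neg2 Sapos unfolding c_def by (simp add: field_simps)
    define c' where "c' = (c + v) / 2"
    have "(\<chi> i. c') \<in> D" unfolding D_def c'_def using cv by simp
    then have "inner a (\<chi> i. c') \<le> b" using ab by blast
    moreover have "(\<chi> i. h u i) \<in> C" unfolding C_def by auto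
    then have "b \<le> inner a (\<chi> i. h u i)" using ab by blast
    moreover have "inner a (\<chi> i. c') = c' * Sa" unfolding inner_eq Sa_def
      by (simp add: sum_distrib_left mult.commute)
    moreover have "inner a (\<chi> i. h u i) = c * Sa" unfolding c_def using Sapos by simp
    moreover have "c * Sa < c' * Sa" using cv Sapos unfolding c'_def by (intro mult_strict_right_mono) auto
    ultimately show False by linarith
  qed
  have low: "expected p (h u) \<ge> v" for u
    using key[of u] Sapos by (simp add: pexp field_simps)
  have up: "expected p' (h us) \<le> v" if "p' \<in> prob_simplex" for p'
    using expected_le[OF that, of "h us" v] hle v_def by blast
  have "saddle_point h us p" unfolding saddle_point_def
    using pS low up[OF pS] up by (meson order_trans)
  then show ?thesis by blast
qed


lemma values_saddle:
  fixes h :: "'u \<Rightarrow> 'a::finite \<Rightarrow> real"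
  assumes sp: "saddle_point h us ps" and uU: "us \<in> U"
  shows "upper_value h U = ereal (expected ps (h us)) \<and> lower_value h U = ereal (expected ps (h us))"
proof -
  define V where "V = expected ps (h us)"
  have psS: "ps \<in> prob_simplex" and sp1: "\<And>p. p \<in> prob_simplex \<Longrightarrow> expected p (h us) \<le> V"
    and sp2: "\<And>u. V \<le> expected ps (h u)"
    using sp unfolding saddle_point_def V_def by auto
  have "upper_value h U \<le> ereal V"
  proof -
    have "upper_value h U \<le> (SUP p\<in>prob_simplex. ereal (expected p (h us)))"
      unfolding upper_value_def using uU by (rule INF_lower)
    also have "\<dots> \<le> ereal V" using sp1 by (intro SUP_least) auto
    finally show ?thesis .
  qed
  moreover have "upper_value h U \<ge> ereal V"
    unfolding upper_value_def
  proof (rule INF_greatest)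
    fix u assume "u \<in> U"
    have "ereal V \<le> ereal (expected ps (h u))" using sp2 by simp
    also have "\<dots> \<le> (SUP p\<in>prob_simplex. ereal (expected p (h u)))" using psS by (rule SUP_upper)
    finally show "ereal V \<le> \<dots>" .
  qed
  moreover have "lower_value h U \<le> ereal V"
    unfolding lower_value_def
  proof (rule SUP_least)
    fix p :: "'a \<Rightarrow> real" assume "p \<in> prob_simplex"
    have "(INF u\<in>U. ereal (expected p (h u))) \<le> ereal (expected p (h us))" using uU by (rule INF_lower)
    also have "\<dots> \<le> ereal V" using sp1[OF \<open>p \<in> prob_simplex\<close>] by simp
    finally show "(INF u\<in>U. ereal (expected p (h u))) \<le> ereal V" .
  qed
  moreover have "lower_value h U \<ge> ereal V"
  proof -
    have "ereal V \<le> (INF u\<in>U. ereal (expected ps (h u)))" using sp2 by (intro INF_greatest) auto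
    also have "\<dots> \<le> lower_value h U" unfolding lower_value_def using psS by (rule SUP_upper)
    finally show ?thesis .
  qed
  ultimately show ?thesis unfolding V_def by (meson order.antisym)
qed

lemma saddle_bound:
  fixes h :: "'u::zero \<Rightarrow> 'a::finite \<Rightarrow> real"
  assumes sp: "saddle_point h us ps"
  shows "h us i \<le> (\<Sum>j\<in>UNIV. \<bar>h 0 j\<bar>)"
proof -
  have psS: "ps \<in> prob_simplex" using sp unfolding saddle_point_def by auto
  have "h us i = expected (\<lambda>j. if j = i then 1 else 0) (h us)" by (simp add: expected_unit)
  also have "\<dots> \<le> expected ps (h us)" using sp unit_in_simplex unfolding saddle_point_def by blast
  also have "\<dots> \<le> expected ps (h 0)" using sp unfolding saddle_point_def by blast
  also have "\<dots> \<le> (\<Sum>j\<in>UNIV. \<bar>h 0 j\<bar>)"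
  proof (rule expected_le[OF psS])
    fix k
    have "h 0 k \<le> \<bar>h 0 k\<bar>" by simp
    also have "\<dots> \<le> (\<Sum>j\<in>UNIV. \<bar>h 0 j\<bar>)" by (rule member_le_sum) auto
    finally show "h 0 k \<le> (\<Sum>j\<in>UNIV. \<bar>h 0 j\<bar>)" .
  qed
  finally show ?thesis .
qed

lemma coercive_bound:
  assumes cA: "coercive A" and cB: "coercive B" and w: "0 \<le> w" "w \<le> 1"
  shows "\<exists>R. \<forall>u. w * A u + (1 - w) * B u \<le> c \<longrightarrow> norm u \<le> R"
proof -
  obtain \<eta>0 where e0: "filterlim \<eta>0 at_top at_top" "\<forall>u. \<eta>0 (norm u) \<le> A u"
    using cA unfolding coercive_def by blast
  obtain \<eta>1 where e1: "filterlim \<eta>1 at_top at_top" "\<forall>u. \<eta>1 (norm u) \<le> B u"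
    using cB unfolding coercive_def by blast
  obtain N0 where N0: "\<forall>y\<ge>N0. c + 1 \<le> \<eta>0 y"
    using e0(1) unfolding filterlim_at_top eventually_at_top_linorder by blast
  obtain N1 where N1: "\<forall>y\<ge>N1. c + 1 \<le> \<eta>1 y"
    using e1(1) unfolding filterlim_at_top eventually_at_top_linorder by blast
  show ?thesis
  proof (intro exI allI impI)
    fix u assume hu: "w * A u + (1 - w) * B u \<le> c"
    show "norm u \<le> max N0 N1"
    proof (rule ccontr)
      assume "\<not> norm u \<le> max N0 N1"
      then have "c + 1 \<le> A u" "c + 1 \<le> B u" using N0 N1 e0(2) e1(2)
        by (meson linorder_not_le max.strict_boundedE order_trans less_imp_le)+
      then have "w * (c + 1) + (1 - w) * (c + 1) \<le> w * A u + (1 - w) * B u"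
        using w by (intro add_mono mult_left_mono) auto
      then show False using hu by (simp add: algebra_simps)
    qed
  qed
qed

theorem theorem1:
  fixes F :: "real^'n \<Rightarrow> real^'m \<Rightarrow> real^'n"
    and \<sigma>0 :: "real^'n \<Rightarrow> real^'m \<Rightarrow> real"
    and \<sigma>1 :: "real^'n \<Rightarrow> real"
    and g0 :: "'a::finite \<Rightarrow> 'f::finite \<Rightarrow> real"
    and P :: "'a \<Rightarrow> 'f \<Rightarrow> 'f \<Rightarrow> real"
    and q :: "'f \<Rightarrow> real"
  assumes P_stoch: "\<And>a. row_stochastic (P a)"
    and q_range: "\<And>i. 0 \<le> q i \<and> q i \<le> 1"
    and hyp0: "\<And>x s a. continuous_on UNIV (\<lambda>u. Payoff \<sigma>0 \<sigma>1 g0 x s (F x 0) u a)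
                      \<and> coercive (\<lambda>u. Payoff \<sigma>0 \<sigma>1 g0 x s (F x 0) u a)
                      \<and> convex_on UNIV (\<lambda>u. Payoff \<sigma>0 \<sigma>1 g0 x s (F x 0) u a)"
    and hyp1: "\<And>x s a. continuous_on UNIV (\<lambda>u. Payoff \<sigma>0 \<sigma>1 g0 x s (F x u) u a)
                      \<and> coercive (\<lambda>u. Payoff \<sigma>0 \<sigma>1 g0 x s (F x u) u a)
                      \<and> convex_on UNIV (\<lambda>u. Payoff \<sigma>0 \<sigma>1 g0 x s (F x u) u a)"
  shows "(\<forall>x s. upper_value (hvec F \<sigma>0 \<sigma>1 g0 P q x s) UNIV
                 = lower_value (hvec F \<sigma>0 \<sigma>1 g0 P q x s) UNIV
             \<and> upper_value (hvec F \<sigma>0 \<sigma>1 g0 P q x s) UNIV \<noteq> \<infinity>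
             \<and> upper_value (hvec F \<sigma>0 \<sigma>1 g0 P q x s) UNIV \<noteq> -\<infinity>
             \<and> (\<exists>us ps. saddle_point (hvec F \<sigma>0 \<sigma>1 g0 P q x s) us ps))
       \<and> (\<forall>x. \<exists>U. compact U \<and>
             (\<forall>s. (\<forall>us ps. saddle_point (hvec F \<sigma>0 \<sigma>1 g0 P q x s) us ps \<longrightarrow> us \<in> U)
                  \<and> upper_value (hvec F \<sigma>0 \<sigma>1 g0 P q x s) U
                      = upper_value (hvec F \<sigma>0 \<sigma>1 g0 P q x s) UNIV
                  \<and> lower_value (hvec F \<sigma>0 \<sigma>1 g0 P q x s) U
                      = lower_value (hvec F \<sigma>0 \<sigma>1 g0 P q x s) UNIV))"
proof -
  have Pq01: "0 \<le> Pq P q i s \<and> Pq P q i s \<le> 1" for i s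
  proof -
    have "0 \<le> Pq P q i s" unfolding Pq_def using P_stoch[of i] q_range
      by (intro sum_nonneg mult_nonneg_nonneg) (auto simp: row_stochastic_def)
    moreover have "Pq P q i s \<le> (\<Sum>k\<in>UNIV. P i s k)" unfolding Pq_def using P_stoch[of i] q_range
      by (intro sum_mono) (auto simp: row_stochastic_def intro: mult_left_le)
    ultimately show ?thesis using P_stoch[of i] by (simp add: row_stochastic_def)
  qed
  have sad: "\<exists>us ps. saddle_point (hvec F \<sigma>0 \<sigma>1 g0 P q x s) us ps" for x s
  proof (rule core)
    fix i
    show "continuous_on UNIV (\<lambda>u. hvec F \<sigma>0 \<sigma>1 g0 P q x s u i)" unfolding hvec_def
      using hyp0[of x s i] hyp1[of x s i] by (intro continuous_intros) auto
    show "convex_on UNIV (\<lambda>u. hvec F \<sigma>0 \<sigma>1 g0 P q x s u i)" unfolding hvec_def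
      using hyp0[of x s i] hyp1[of x s i] Pq01[of i s] by (intro convex_on_add convex_on_cmul) auto
  next
    fix c
    obtain R where R: "\<forall>u. hvec F \<sigma>0 \<sigma>1 g0 P q x s u undefined \<le> c \<longrightarrow> norm u \<le> R"
      using coercive_bound[of "\<lambda>u. Payoff \<sigma>0 \<sigma>1 g0 x s (F x u) u undefined"
          "\<lambda>u. Payoff \<sigma>0 \<sigma>1 g0 x s (F x 0) u undefined" "Pq P q undefined s" c]
        hyp0 hyp1 Pq01 unfolding hvec_def by blast
    then show "\<exists>R. \<forall>u. (\<forall>i. hvec F \<sigma>0 \<sigma>1 g0 P q x s u i \<le> c) \<longrightarrow> norm u \<le> R" by blast
  qed
  have part1: "upper_value (hvec F \<sigma>0 \<sigma>1 g0 P q x s) UNIV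
                 = lower_value (hvec F \<sigma>0 \<sigma>1 g0 P q x s) UNIV
             \<and> upper_value (hvec F \<sigma>0 \<sigma>1 g0 P q x s) UNIV \<noteq> \<infinity>
             \<and> upper_value (hvec F \<sigma>0 \<sigma>1 g0 P q x s) UNIV \<noteq> -\<infinity>
             \<and> (\<exists>us ps. saddle_point (hvec F \<sigma>0 \<sigma>1 g0 P q x s) us ps)" for x s
  proof -
    obtain us ps where sp: "saddle_point (hvec F \<sigma>0 \<sigma>1 g0 P q x s) us ps" using sad by blast
    show ?thesis using values_saddle[OF sp, of UNIV] sp by auto
  qed
  have part2: "\<exists>U. compact U \<and>
             (\<forall>s. (\<forall>us ps. saddle_point (hvec F \<sigma>0 \<sigma>1 g0 P q x s) us ps \<longrightarrow> us \<in> U)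
                  \<and> upper_value (hvec F \<sigma>0 \<sigma>1 g0 P q x s) U
                      = upper_value (hvec F \<sigma>0 \<sigma>1 g0 P q x s) UNIV
                  \<and> lower_value (hvec F \<sigma>0 \<sigma>1 g0 P q x s) U
                      = lower_value (hvec F \<sigma>0 \<sigma>1 g0 P q x s) UNIV)" for x
  proof -
    have "\<forall>s. \<exists>R. \<forall>us ps. saddle_point (hvec F \<sigma>0 \<sigma>1 g0 P q x s) us ps \<longrightarrow> norm us \<le> R"
    proof
      fix s
      obtain R where R: "\<forall>u. hvec F \<sigma>0 \<sigma>1 g0 P q x s u undefined
             \<le> (\<Sum>j\<in>UNIV. \<bar>hvec F \<sigma>0 \<sigma>1 g0 P q x s 0 j\<bar>) \<longrightarrow> norm u \<le> R"
        using coercive_bound[of "\<lambda>u. Payoff \<sigma>0 \<sigma>1 g0 x s (F x u) u undefined"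
            "\<lambda>u. Payoff \<sigma>0 \<sigma>1 g0 x s (F x 0) u undefined" "Pq P q undefined s"
            "\<Sum>j\<in>UNIV. \<bar>hvec F \<sigma>0 \<sigma>1 g0 P q x s 0 j\<bar>"]
          hyp0 hyp1 Pq01 unfolding hvec_def by blast
      show "\<exists>R. \<forall>us ps. saddle_point (hvec F \<sigma>0 \<sigma>1 g0 P q x s) us ps \<longrightarrow> norm us \<le> R"
        using R saddle_bound by blast
    qed
    then obtain Rf where Rf: "\<And>s us ps. saddle_point (hvec F \<sigma>0 \<sigma>1 g0 P q x s) us ps \<Longrightarrow> norm us \<le> Rf s"
      by metis
    define U where "U = cball (0::real^'m) (\<Sum>s\<in>UNIV. \<bar>Rf s\<bar>)"
    have inU: "us \<in> U" if "saddle_point (hvec F \<sigma>0 \<sigma>1 g0 P q x s) us ps" for s us ps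
    proof -
      have "norm us \<le> \<bar>Rf s\<bar>" using Rf[OF that] by linarith
      also have "\<dots> \<le> (\<Sum>s\<in>UNIV. \<bar>Rf s\<bar>)" by (rule member_le_sum) auto
      finally show ?thesis unfolding U_def by (simp add: dist_norm)
    qed
    show ?thesis
    proof (intro exI conjI allI impI)
      show "compact U" unfolding U_def by simp
      fix s
      show "\<And>us ps. saddle_point (hvec F \<sigma>0 \<sigma>1 g0 P q x s) us ps \<Longrightarrow> us \<in> U" using inU by blast
      obtain us ps where sp: "saddle_point (hvec F \<sigma>0 \<sigma>1 g0 P q x s) us ps" using sad by blast
      show "upper_value (hvec F \<sigma>0 \<sigma>1 g0 P q x s) U = upper_value (hvec F \<sigma>0 \<sigma>1 g0 P q x s) UNIV"
        using values_saddle[OF sp, of UNIV] values_saddle[OF sp, of U] inU[OF sp] by simp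
      show "lower_value (hvec F \<sigma>0 \<sigma>1 g0 P q x s) U = lower_value (hvec F \<sigma>0 \<sigma>1 g0 P q x s) UNIV"
        using values_saddle[OF sp, of UNIV] values_saddle[OF sp, of U] inU[OF sp] by simp
    qed
  qed
  show ?thesis using part1 part2 by blast
qed

end
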